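(* (i) Let $H=(V,E,(a,b))$ be an undirected multigraph with output pair in which any two distinct nodes are joined by at most one edge, and let $v\in V\setminus\{a,b\}$ be incident to at least one edge. Then there exists a finite sequence of operations from the node-based bank $\mathcal F_n$ that deletes $v$ and deletes no other node if and only if $v$ has at most $1$ neighbor. (ii) Let $H=(V,E,(a,b))$ be any directed multigraph with output pair and let $v\in V\setminus\{a,b\}$ be incident to at least one edge. Then there exists a finite sequence of operations from the edge-based bank $\mathcal F_e$ that deletes $v$ and deletes no other node if and only if $v$ has at most $2$ neighbors.
   Context: A (directed, resp. undirected) multigraph with output pair is $H=(V,E,(a,b))$ with finite node set $V$, $E$ a finite multiset of ordered (resp. unordered) pairs of nodes (loops and parallel edges allowed), and $a,b\in V$ a distinguished not necessarily distinct pair (the red edge, not in $E$). Two distinct nodes are neighbors if some edge of $E$ joins them. Node-based bank $\mathcal F_n$ (acting on undirected multigraphs): (N1) if $v\notin\{a,b\}$ and the only edge incident to $v$ is a single self-loop, delete $v$ and that loop; (N2) if a node has at least two self-loops, remove one of them; (N3) if $v\notin\{a,b\}$ has no self-loop and exactly one incident edge $\{v,u\}$, $u\ne v$, delete $v$ and that edge and add a self-loop at $u$; (N4) if $v\notin\{a,b\}$ has exactly one self-loop and exactly one other incident edge $\{v,u\}$, $u\neq v$, delete $v$ and its edges and add a self-loop at $u$. Edge-based bank $\mathcal F_e$ (acting on directed multigraphs): (E1) as N1; (E2) as N2; (E3) if $v\notin\{a,b\}$ has no self-loop and exactly one incident edge, which is $(v,u)$ with $u\ne v$, delete $v$ and that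 edge and add a self-loop $(u,u)$; (E4) replace a self-loop $(v,v)$ by an edge $(v,u)$ for some node $u\neq v$; (E5) if there are two parallel edges $(u,v),(u,v)$ with $u\ne v$, remove one of them; (E6) replace an edge $(u,v)$, $u\ne v$, by $(v,u)$; (E7) if $w\notin\{a,b\}$ has no self-loop and exactly two incident edges $(u,w)$ and $(w,v)$ with $u,v,w$ pairwise distinct, delete $w$ and these edges and add the edge $(u,v)$. *)

theory Defs
  imports Main "HOL-Library.Multiset" "HOL-Library.Uprod"
begin

(* Undirected multigraph: node set V and multiset E of unordered pairs (Upair u v;
   a self-loop is Upair v v).
   The output pair (a,b) is a fixed parameter, never part of E. *)

definition wf_ugraph :: "'a set \<Rightarrow> 'a uprod multiset \<Rightarrow> 'a \<Rightarrow> 'a \<Rightarrow> bool" where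
  "wf_ugraph V E a b \<longleftrightarrow> finite V \<and> a \<in> V \<and> b \<in> V \<and> (\<forall>e\<in>#E. set_uprod e \<subseteq> V)"

definition wf_dgraph :: "'a set \<Rightarrow> ('a \<times> 'a) multiset \<Rightarrow> 'a \<Rightarrow> 'a \<Rightarrow> bool" where
  "wf_dgraph V E a b \<longleftrightarrow> finite V \<and> a \<in> V \<and> b \<in> V \<and> (\<forall>(x,y)\<in>#E. x \<in> V \<and> y \<in> V)"

definition uinc :: "'a uprod multiset \<Rightarrow> 'a \<Rightarrow> 'a uprod multiset" where
  "uinc E v = filter_mset (\<lambda>e. v \<in> set_uprod e) E"

definition dinc :: "('a \<times> 'a) multiset \<Rightarrow> 'a \<Rightarrow> ('a \<times> 'a) multiset" where
  "dinc E v = filter_mset (\<lambda>(x,y). x = v \<or> y = v) E"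

definition uneighbors :: "'a uprod multiset \<Rightarrow> 'a \<Rightarrow> 'a set" where
  "uneighbors E v = {u. u \<noteq> v \<and> Upair v u \<in># E}"

definition dneighbors :: "('a \<times> 'a) multiset \<Rightarrow> 'a \<Rightarrow> 'a set" where
  "dneighbors E v = {u. u \<noteq> v \<and> ((v,u) \<in># E \<or> (u,v) \<in># E)}"

inductive nstep :: "'a \<Rightarrow> 'a \<Rightarrow> 'a set \<times> 'a uprod multiset \<Rightarrow> 'a set \<times> 'a uprod multiset \<Rightarrow> bool"
  for a b where
  N1: "\<lbrakk> v \<in> V; v \<notin> {a,b}; uinc E v = {#Upair v v#} \<rbrakk>
       \<Longrightarrow> nstep a b (V, E) (V - {v}, E - {#Upair v v#})"
| N2: "\<lbrakk> v \<in> V; count E (Upair v v) \<ge> 2 \<rbrakk>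
       \<Longrightarrow> nstep a b (V, E) (V, E - {#Upair v v#})"
| N3: "\<lbrakk> v \<in> V; v \<notin> {a,b}; u \<noteq> v; uinc E v = {#Upair v u#} \<rbrakk>
       \<Longrightarrow> nstep a b (V, E) (V - {v}, E - {#Upair v u#} + {#Upair u u#})"
| N4: "\<lbrakk> v \<in> V; v \<notin> {a,b}; u \<noteq> v; uinc E v = {#Upair v v, Upair v u#} \<rbrakk>
       \<Longrightarrow> nstep a b (V, E) (V - {v}, E - {#Upair v v, Upair v u#} + {#Upair u u#})"

inductive estep :: "'a \<Rightarrow> 'a \<Rightarrow> 'a set \<times> ('a \<times> 'a) multiset \<Rightarrow> 'a set \<times> ('a \<times> 'a) multiset \<Rightarrow> bool"
  for a b where
  E1: "\<lbrakk> v \<in> V; v \<notin> {a,b}; dinc E v = {#(v,v)#} \<rbrakk>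
       \<Longrightarrow> estep a b (V, E) (V - {v}, E - {#(v,v)#})"
| E2: "\<lbrakk> v \<in> V; count E (v,v) \<ge> 2 \<rbrakk>
       \<Longrightarrow> estep a b (V, E) (V, E - {#(v,v)#})"
| E3: "\<lbrakk> v \<in> V; v \<notin> {a,b}; u \<noteq> v; dinc E v = {#(v,u)#} \<rbrakk>
       \<Longrightarrow> estep a b (V, E) (V - {v}, E - {#(v,u)#} + {#(u,u)#})"
| E4: "\<lbrakk> v \<in> V; u \<in> V; u \<noteq> v; (v,v) \<in># E \<rbrakk>
       \<Longrightarrow> estep a b (V, E) (V, E - {#(v,v)#} + {#(v,u)#})"
| E5: "\<lbrakk> u \<noteq> v; count E (u,v) \<ge> 2 \<rbrakk>
       \<Longrightarrow> estep a b (V, E) (V, E - {#(u,v)#})"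
| E6: "\<lbrakk> u \<noteq> v; (u,v) \<in># E \<rbrakk>
       \<Longrightarrow> estep a b (V, E) (V, E - {#(u,v)#} + {#(v,u)#})"
| E7: "\<lbrakk> w \<in> V; w \<notin> {a,b}; u \<noteq> v; u \<noteq> w; v \<noteq> w;
         dinc E w = {#(u,w), (w,v)#} \<rbrakk>
       \<Longrightarrow> estep a b (V, E) (V - {w}, E - {#(u,w), (w,v)#} + {#(u,v)#})"

end

theory Submission
  imports Defs
begin


lemma n_loops: "count E (Upair x x) \<ge> 1 \<Longrightarrow> x \<in> V \<Longrightarrow> \<exists>E'. (nstep a b)\<^sup>*\<^sup>* (V,E) (V,E') \<and>
   count E' (Upair x x) = 1 \<and> (\<forall>z. z \<noteq> Upair x x \<longrightarrow> count E' z = count E z)"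
proof (induction "count E (Upair x x) - 1" arbitrary: E)
  case 0
  then have "count E (Upair x x) = 1" by linarith
  then show ?case by (intro exI[of _ E]) auto
next
  case (Suc n)
  let ?E1 = "E - {#Upair x x#}"
  have s: "nstep a b (V,E) (V,?E1)" using Suc.prems Suc.hyps(2) by (intro N2) auto
  have "n = count ?E1 (Upair x x) - 1" "count ?E1 (Upair x x) \<ge> 1" using Suc.hyps(2) by auto
  from Suc.hyps(1)[OF this(1) this(2) Suc.prems(2)] obtain E' where
    "(nstep a b)\<^sup>*\<^sup>* (V,?E1) (V,E')" "count E' (Upair x x) = 1" "\<forall>z. z \<noteq> Upair x x \<longrightarrow> count E' z = count ?E1 z"
    by blast
  then show ?case using s by (intro exI[of _ E']) (auto intro: converse_rtranclp_into_rtranclp)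
qed

lemma e_loops: "count E (x,x) \<ge> 1 \<Longrightarrow> x \<in> V \<Longrightarrow> \<exists>E'. (estep a b)\<^sup>*\<^sup>* (V,E) (V,E') \<and>
   count E' (x,x) = 1 \<and> (\<forall>z. z \<noteq> (x,x) \<longrightarrow> count E' z = count E z)"
proof (induction "count E (x,x) - 1" arbitrary: E)
  case 0
  then have "count E (x,x) = 1" by linarith
  then show ?case by (intro exI[of _ E]) auto
next
  case (Suc n)
  let ?E1 = "E - {#(x,x)#}"
  have s: "estep a b (V,E) (V,?E1)" using Suc.prems Suc.hyps(2) by (intro E2) auto
  have "n = count ?E1 (x,x) - 1" "count ?E1 (x,x) \<ge> 1" using Suc.hyps(2) by auto
  from Suc.hyps(1)[OF this(1) this(2) Suc.prems(2)] obtain E' where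
    "(estep a b)\<^sup>*\<^sup>* (V,?E1) (V,E')" "count E' (x,x) = 1" "\<forall>z. z \<noteq> (x,x) \<longrightarrow> count E' z = count ?E1 z"
    by blast
  then show ?case using s by (intro exI[of _ E']) (auto intro: converse_rtranclp_into_rtranclp)
qed

lemma e_dedup: "count E (x,y) \<ge> 1 \<Longrightarrow> x \<noteq> y \<Longrightarrow> \<exists>E'. (estep a b)\<^sup>*\<^sup>* (V,E) (V,E') \<and>
   count E' (x,y) = 1 \<and> (\<forall>z. z \<noteq> (x,y) \<longrightarrow> count E' z = count E z)"
proof (induction "count E (x,y) - 1" arbitrary: E)
  case 0
  then have "count E (x,y) = 1" by linarith
  then show ?case by (intro exI[of _ E]) auto
next
  case (Suc n)
  let ?E1 = "E - {#(x,y)#}"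
  have s: "estep a b (V,E) (V,?E1)" using Suc.prems Suc.hyps(2) by (intro E5) auto
  have "n = count ?E1 (x,y) - 1" "count ?E1 (x,y) \<ge> 1" using Suc.hyps(2) by auto
  from Suc.hyps(1)[OF this(1) this(2) Suc.prems(2)] obtain E' where
    "(estep a b)\<^sup>*\<^sup>* (V,?E1) (V,E')" "count E' (x,y) = 1" "\<forall>z. z \<noteq> (x,y) \<longrightarrow> count E' z = count ?E1 z"
    by blast
  then show ?case using s by (intro exI[of _ E']) (auto intro: converse_rtranclp_into_rtranclp)
qed

lemma e_flip: "x \<noteq> y \<Longrightarrow> \<exists>E'. (estep a b)\<^sup>*\<^sup>* (V,E) (V,E') \<and>
   count E' (x,y) = 0 \<and> count E' (y,x) = count E (y,x) + count E (x,y) \<and>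
   (\<forall>z. z \<noteq> (x,y) \<longrightarrow> z \<noteq> (y,x) \<longrightarrow> count E' z = count E z)"
proof (induction "count E (x,y)" arbitrary: E)
  case 0
  then show ?case by (intro exI[of _ E]) auto
next
  case (Suc n)
  let ?E1 = "E - {#(x,y)#} + {#(y,x)#}"
  have "(x,y) \<in># E" using Suc.hyps(2) by (metis Zero_not_Suc count_eq_zero_iff)
  then have s: "estep a b (V,E) (V,?E1)" using Suc.prems by (intro E6) auto
  have "n = count ?E1 (x,y)" using Suc.hyps(2) Suc.prems by auto
  from Suc.hyps(1)[OF this Suc.prems] obtain E' where
    "(estep a b)\<^sup>*\<^sup>* (V,?E1) (V,E')" "count E' (x,y) = 0"
    "count E' (y,x) = count ?E1 (y,x) + count ?E1 (x,y)"
    "\<forall>z. z \<noteq> (x,y) \<longrightarrow> z \<noteq> (y,x) \<longrightarrow> count E' z = count ?E1 z"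
    by blast
  then show ?case using s Suc.hyps(2) Suc.prems
    by (intro exI[of _ E']) (auto intro: converse_rtranclp_into_rtranclp)
qed

lemma uinc_eqI:
  assumes "\<And>y. count M (Upair v y) = count E (Upair v y)" "\<And>x. x \<in># M \<Longrightarrow> v \<in> set_uprod x"
  shows "uinc E v = M"
proof (rule multiset_eqI)
  fix x :: "'a uprod"
  obtain p q where x: "x = Upair p q" by (cases x) auto
  show "count (uinc E v) x = count M x"
  proof (cases "v \<in> set_uprod x")
    case True
    then obtain y where "x = Upair v y" using x by auto
    then show ?thesis using assms(1)[of y] True by (simp add: uinc_def)
  next
    case False
    then have "count M x = 0" using assms(2) by (meson not_in_iff)
    then show ?thesis using False by (simp add: uinc_def)
  qed
qed

lemma dinc_eqI:
  assumes "\<And>y. count M (v,y) = count E (v,y)" "\<And>y. count M (y,v) = count E (y,v)"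
    "\<And>x. x \<in># M \<Longrightarrow> fst x = v \<or> snd x = v"
  shows "dinc E v = M"
proof (rule multiset_eqI)
  fix x :: "'a \<times> 'a"
  obtain p q where x: "x = (p,q)" by (cases x) auto
  show "count (dinc E v) x = count M x"
  proof (cases "p = v \<or> q = v")
    case True
    then show ?thesis using assms(1)[of q] assms(2)[of p] x by (auto simp: dinc_def)
  next
    case False
    then have "count M x = 0" using assms(3) x by (metis fst_conv snd_conv not_in_iff)
    then show ?thesis using False x by (simp add: dinc_def)
  qed
qed



lemma n_inv:
  assumes "(nstep a b)\<^sup>*\<^sup>* (V,E) (W,F)" "card (uneighbors E v) \<ge> 2" "v \<in> V"
  shows "W \<subseteq> V \<and> (V - {v} \<subseteq> W \<longrightarrow> v \<in> W \<and> uneighbors E v \<subseteq> uneighbors F v)"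
  using assms(1)
proof (induction W F rule: rtranclp_induct2)
  case refl
  then show ?case using assms(3) by auto
next
  case (step W F W' F')
  let ?N = "uneighbors E v"
  have fin: "finite ?N" using assms(2) card.infinite by force
  have del: "\<lbrakk> W' = W - {x}; x \<in> W; x \<noteq> v \<rbrakk> \<Longrightarrow> \<not> V - {v} \<subseteq> W'" for x
    using step.IH by blast
  have one: "\<not> ?N \<subseteq> {u}" for u
    using card_mono[of "{u}" ?N] assms(2) by auto
  from step.hyps(2) show ?case
  proof cases
    case (N1 x)
    show ?thesis
    proof (intro conjI impI)
      show "W' \<subseteq> V" using step.IH N1 by auto
      assume h: "V - {v} \<subseteq> W'"
      then have h2: "V - {v} \<subseteq> W" using N1 by auto
      have "x = v" using del[of x] N1 h by auto
      have "?N \<subseteq> {}"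
      proof
        fix w assume "w \<in> ?N"
        then have "w \<in> uneighbors F v" "w \<noteq> v" using step.IH h2 by (auto simp: uneighbors_def)
        then have "Upair v w \<in># uinc F v" by (simp add: uneighbors_def uinc_def)
        then show "w \<in> {}" using N1 \<open>x = v\<close> \<open>w \<noteq> v\<close> by auto
      qed
      then show "v \<in> W'" using one by blast
      show "?N \<subseteq> uneighbors F' v" using one \<open>?N \<subseteq> {}\<close> by blast
    qed
  next
    case (N2 x)
    have "uneighbors F' v = uneighbors F v"
      using N2 by (auto simp: uneighbors_def in_diff_count)
    then show ?thesis using step.IH N2 by auto
  next
    case (N3 x u)
    show ?thesis
    proof (intro conjI impI)
      show "W' \<subseteq> V" using step.IH N3 by auto
      assume h: "V - {v} \<subseteq> W'"
      then have h2: "V - {v} \<subseteq> W" using N3 by auto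
      have "x = v" using del[of x] N3 h by auto
      have "?N \<subseteq> {u}"
      proof
        fix w assume "w \<in> ?N"
        then have "w \<in> uneighbors F v" "w \<noteq> v" using step.IH h2 by (auto simp: uneighbors_def)
        then have "Upair v w \<in># uinc F v" by (simp add: uneighbors_def uinc_def)
        then show "w \<in> {u}" using N3 \<open>x = v\<close> \<open>w \<noteq> v\<close> by auto
      qed
      then show "v \<in> W'" using one by blast
      then show "?N \<subseteq> uneighbors F' v" using one \<open>?N \<subseteq> {u}\<close> by blast
    qed
  next
    case (N4 x u)
    show ?thesis
    proof (intro conjI impI)
      show "W' \<subseteq> V" using step.IH N4 by auto
      assume h: "V - {v} \<subseteq> W'"
      then have h2: "V - {v} \<subseteq> W" using N4 by auto
      have "x = v" using del[of x] N4 h by auto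
      have "?N \<subseteq> {u}"
      proof
        fix w assume "w \<in> ?N"
        then have "w \<in> uneighbors F v" "w \<noteq> v" using step.IH h2 by (auto simp: uneighbors_def)
        then have "Upair v w \<in># uinc F v" by (simp add: uneighbors_def uinc_def)
        then show "w \<in> {u}" using N4 \<open>x = v\<close> \<open>w \<noteq> v\<close> by auto
      qed
      then show "v \<in> W'" using one by blast
      then show "?N \<subseteq> uneighbors F' v" using one \<open>?N \<subseteq> {u}\<close> by blast
    qed
  qed
qed



lemma mem_diff_ne: "p \<noteq> q \<Longrightarrow> p \<in># F \<Longrightarrow> p \<in># F - {#q#}"
  by (simp add: in_diff_count)

lemma mem_diff_2: "count F q \<ge> 2 \<Longrightarrow> p \<in># F \<Longrightarrow> p \<in># F - {#q#}"
  by (cases "p = q") (auto simp: in_diff_count)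

lemma d_inv:
  assumes "(estep a b)\<^sup>*\<^sup>* (V,E) (W,F)" "card (dneighbors E v) \<ge> 3" "v \<in> V"
  shows "W \<subseteq> V \<and> (V - {v} \<subseteq> W \<longrightarrow> v \<in> W \<and> dneighbors E v \<subseteq> dneighbors F v)"
  using assms(1)
proof (induction W F rule: rtranclp_induct2)
  case refl
  then show ?case using assms(3) by auto
next
  case (step W F W' F')
  let ?N = "dneighbors E v"
  have del: "\<lbrakk> W' = W - {x}; x \<in> W; x \<noteq> v \<rbrakk> \<Longrightarrow> \<not> V - {v} \<subseteq> W'" for x
    using step.IH by blast
  have two: "\<not> ?N \<subseteq> {u, w}" for u w
  proof
    assume "?N \<subseteq> {u, w}"
    then have "card ?N \<le> card {u,w}" by (simp add: card_mono)
    moreover have "card {u,w} \<le> 2" by (cases "u = w") auto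
    ultimately show False using assms(2) by linarith
  qed
  have nb: "y \<in> dneighbors F v \<Longrightarrow> (v,y) \<in># dinc F v \<or> (y,v) \<in># dinc F v" for y
    by (auto simp: dneighbors_def dinc_def)
  from step.hyps(2) show ?case
  proof cases
    case (E1 x)
    show ?thesis
    proof (intro conjI impI)
      show "W' \<subseteq> V" using step.IH E1 by auto
      assume h: "V - {v} \<subseteq> W'"
      then have h2: "V - {v} \<subseteq> W" using E1 by auto
      have "x = v" using del[of x] E1 h by auto
      have "?N \<subseteq> {v, v}"
      proof
        fix w assume "w \<in> ?N"
        then have "w \<in> dneighbors F v" "w \<noteq> v" using step.IH h2 by (auto simp: dneighbors_def)
        then show "w \<in> {v, v}" using nb[of w] E1 \<open>x = v\<close> by auto
      qed
      then show "v \<in> W'" using two by blast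
      show "?N \<subseteq> dneighbors F' v" using two \<open>?N \<subseteq> {v,v}\<close> by blast
    qed
  next
    case (E2 x)
    have "dneighbors F' v = dneighbors F v"
      using E2 by (auto simp: dneighbors_def in_diff_count)
    then show ?thesis using step.IH E2 by auto
  next
    case (E3 x u)
    show ?thesis
    proof (intro conjI impI)
      show "W' \<subseteq> V" using step.IH E3 by auto
      assume h: "V - {v} \<subseteq> W'"
      then have h2: "V - {v} \<subseteq> W" using E3 by auto
      have "x = v" using del[of x] E3 h by auto
      have "?N \<subseteq> {u, u}"
      proof
        fix w assume "w \<in> ?N"
        then have "w \<in> dneighbors F v" "w \<noteq> v" using step.IH h2 by (auto simp: dneighbors_def)
        then show "w \<in> {u, u}" using nb[of w] E3 \<open>x = v\<close> by auto
      qed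
      then show "v \<in> W'" using two by blast
      show "?N \<subseteq> dneighbors F' v" using two \<open>?N \<subseteq> {u,u}\<close> by blast
    qed
  next
    case (E4 x u)
    have "dneighbors F v \<subseteq> dneighbors F' v"
      using E4 by (auto simp: dneighbors_def intro: mem_diff_ne)
    then show ?thesis using step.IH E4 by auto
  next
    case (E5 u w)
    have "dneighbors F v \<subseteq> dneighbors F' v"
      using E5 by (auto simp: dneighbors_def intro: mem_diff_2)
    then show ?thesis using step.IH E5 by auto
  next
    case (E6 u w)
    have "dneighbors F v \<subseteq> dneighbors F' v"
      proof
      fix y assume "y \<in> dneighbors F v"
      then have y: "y \<noteq> v" "(v,y) \<in># F \<or> (y,v) \<in># F" by (auto simp: dneighbors_def)
      have "(v,y) \<in># F' \<or> (y,v) \<in># F'"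
      proof (cases "(v,y) = (u,w) \<or> (y,v) = (u,w)")
        case True then show ?thesis using E6 by auto
      next
        case False then show ?thesis using E6 y by (auto intro: mem_diff_ne)
      qed
      then show "y \<in> dneighbors F' v" using y by (auto simp: dneighbors_def)
    qed
    then show ?thesis using step.IH E6 by auto
  next
    case (E7 x u w)
    show ?thesis
    proof (intro conjI impI)
      show "W' \<subseteq> V" using step.IH E7 by auto
      assume h: "V - {v} \<subseteq> W'"
      then have h2: "V - {v} \<subseteq> W" using E7 by auto
      have "x = v" using del[of x] E7 h by auto
      have "?N \<subseteq> {u, w}"
      proof
        fix y assume "y \<in> ?N"
        then have "y \<in> dneighbors F v" "y \<noteq> v" using step.IH h2 by (auto simp: dneighbors_def)
        then show "y \<in> {u, w}" using nb[of y] E7 \<open>x = v\<close> by auto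
      qed
      then show "v \<in> W'" using two by blast
      show "?N \<subseteq> dneighbors F' v" using two \<open>?N \<subseteq> {u,w}\<close> by blast
    qed
  qed
qed



lemma n_ok:
  assumes wf: "wf_ugraph V E a b" and sim: "\<forall>u w. u \<noteq> w \<longrightarrow> count E (Upair u w) \<le> 1"
    and v: "v \<in> V" "v \<notin> {a,b}" and ne: "uinc E v \<noteq> {#}" and c: "card (uneighbors E v) \<le> 1"
  shows "\<exists>E'. (nstep a b)\<^sup>*\<^sup>* (V,E) (V-{v},E')"
proof -
  let ?L = "Upair v v"
  have "uneighbors E v \<subseteq> V" using wf by (fastforce simp: wf_ugraph_def uneighbors_def)
  then have fin: "finite (uneighbors E v)" using wf by (auto simp: wf_ugraph_def intro: finite_subset)
  have nb: "y \<notin> uneighbors E v \<Longrightarrow> y \<noteq> v \<Longrightarrow> count E (Upair v y) = 0" for y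
    by (auto simp: uneighbors_def count_eq_zero_iff)
  have "uneighbors E v = {} \<or> (\<exists>u. uneighbors E v = {u})"
    using c fin by (metis card_0_eq card_1_singletonE le_Suc_eq le_zero_eq One_nat_def)
  then show ?thesis
  proof
    assume N: "uneighbors E v = {}"
    have "count E ?L \<ge> 1"
    proof (rule ccontr)
      assume a0: "\<not> count E ?L \<ge> 1"
      have "uinc E v = {#}"
      proof (rule uinc_eqI)
        fix y show "count {#} (Upair v y) = count E (Upair v y)"
          using a0 nb[of y] N by (cases "y = v") (auto simp: count_eq_zero_iff)
      qed auto
      then show False using ne by simp
    qed
    from n_loops[OF this v(1), of a b] obtain E1 where E1: "(nstep a b)\<^sup>*\<^sup>* (V,E) (V,E1)"
      "count E1 ?L = 1" "\<forall>z. z \<noteq> ?L \<longrightarrow> count E1 z = count E z" by blast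
    have "uinc E1 v = {#?L#}"
    proof (rule uinc_eqI)
      fix y show "count {#?L#} (Upair v y) = count E1 (Upair v y)"
        using E1 nb[of y] N by (cases "y = v") auto
    qed auto
    then have "nstep a b (V,E1) (V - {v}, E1 - {#?L#})" using v by (intro N1) auto
    then show ?thesis using E1(1) by (meson rtranclp.rtrancl_into_rtrancl)
  next
    assume "\<exists>u. uneighbors E v = {u}"
    then obtain u where N: "uneighbors E v = {u}" by blast
    then have uv: "u \<noteq> v" "count E (Upair v u) \<ge> 1" by (auto simp: uneighbors_def)
    then have cu: "count E (Upair v u) = 1" using sim by (metis le_antisym)
    have nb2: "y \<noteq> v \<Longrightarrow> y \<noteq> u \<Longrightarrow> count E (Upair v y) = 0" for y using nb N by auto
    show ?thesis
    proof (cases "count E ?L = 0")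
      case True
      have "uinc E v = {#Upair v u#}"
      proof (rule uinc_eqI)
        fix y show "count {#Upair v u#} (Upair v y) = count E (Upair v y)"
          using True cu nb2[of y] uv by (cases "y = v"; cases "y = u") auto
      qed auto
      then have "nstep a b (V,E) (V - {v}, E - {#Upair v u#} + {#Upair u u#})" using v uv by (intro N3) auto
      then show ?thesis by blast
    next
      case False
      then have "count E ?L \<ge> 1" by simp
      from n_loops[OF this v(1), of a b] obtain E1 where E1: "(nstep a b)\<^sup>*\<^sup>* (V,E) (V,E1)"
        "count E1 ?L = 1" "\<forall>z. z \<noteq> ?L \<longrightarrow> count E1 z = count E z" by blast
      have "uinc E1 v = {#?L, Upair v u#}"
      proof (rule uinc_eqI)
        fix y show "count {#?L, Upair v u#} (Upair v y) = count E1 (Upair v y)"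
          using E1 cu nb2[of y] uv by (cases "y = v"; cases "y = u") auto
      qed auto
      then have "nstep a b (V,E1) (V - {v}, E1 - {#?L, Upair v u#} + {#Upair u u#})" using v uv by (intro N4) auto
      then show ?thesis using E1(1) by (meson rtranclp.rtrancl_into_rtrancl)
    qed
  qed
qed



lemma e_absorb: assumes "x \<in> V" "u \<in> V" "u \<noteq> x" shows "\<exists>E'. (estep a b)\<^sup>*\<^sup>* (V,E) (V,E') \<and>
   count E' (x,x) = 0 \<and> count E' (x,u) = count E (x,u) + (if count E (x,x) = 0 then 0 else 1) \<and>
   (\<forall>z. z \<noteq> (x,x) \<longrightarrow> z \<noteq> (x,u) \<longrightarrow> count E' z = count E z)"
proof (cases "count E (x,x) = 0")
  case True
  then show ?thesis by (intro exI[of _ E]) auto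
next
  case False
  then have "count E (x,x) \<ge> 1" by simp
  from e_loops[OF this, of V a b] obtain E1 where E1: "(estep a b)\<^sup>*\<^sup>* (V,E) (V,E1)"
      "count E1 (x,x) = 1" "\<forall>z. z \<noteq> (x,x) \<longrightarrow> count E1 z = count E z" using \<open>x \<in> V\<close> by blast
  have "estep a b (V,E1) (V, E1 - {#(x,x)#} + {#(x,u)#})"
    using E1(2) \<open>x \<in> V\<close> \<open>u \<in> V\<close> \<open>u \<noteq> x\<close> by (intro estep.E4) (auto simp flip: count_greater_zero_iff)
  then have "(estep a b)\<^sup>*\<^sup>* (V,E) (V, E1 - {#(x,x)#} + {#(x,u)#})"
    using E1(1) by (meson rtranclp.rtrancl_into_rtrancl)
  then show ?thesis using E1 False \<open>u \<noteq> x\<close> by (intro exI[of _ "E1 - {#(x,x)#} + {#(x,u)#}"]) auto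
qed

lemma e_ok:
  assumes wf: "wf_dgraph V E a b" and v: "v \<in> V" "v \<notin> {a,b}" and ne: "dinc E v \<noteq> {#}"
    and c: "card (dneighbors E v) \<le> 2"
  shows "\<exists>E'. (estep a b)\<^sup>*\<^sup>* (V,E) (V-{v},E')"
proof -
  have sub: "dneighbors E v \<subseteq> V" using wf by (fastforce simp: wf_dgraph_def dneighbors_def)
  then have fin: "finite (dneighbors E v)" using wf by (auto simp: wf_dgraph_def intro: finite_subset)
  have nb: "y \<notin> dneighbors E v \<Longrightarrow> y \<noteq> v \<Longrightarrow> count E (v,y) = 0 \<and> count E (y,v) = 0" for y
    by (auto simp: dneighbors_def count_eq_zero_iff)
  have mem: "y \<in> dneighbors E v \<Longrightarrow> y \<in> V \<and> y \<noteq> v \<and> count E (v,y) + count E (y,v) \<ge> 1" for y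
  proof -
    assume "y \<in> dneighbors E v"
    then have "y \<in> V" "y \<noteq> v" "count E (v,y) > 0 \<or> count E (y,v) > 0" using sub by (auto simp: dneighbors_def)
    then show ?thesis by linarith
  qed
  have "card (dneighbors E v) = 0 \<or> card (dneighbors E v) = 1 \<or> card (dneighbors E v) = 2"
    using c by linarith
  then have "dneighbors E v = {} \<or> (\<exists>u. dneighbors E v = {u}) \<or> (\<exists>u w. u \<noteq> w \<and> dneighbors E v = {u,w})"
    using fin by (metis card_0_eq card_1_singletonE card_2_iff)
  moreover
  {
    assume N: "dneighbors E v = {}"
    have "count E (v,v) \<ge> 1"
    proof (rule ccontr)
      assume a0: "\<not> count E (v,v) \<ge> 1"
      have "dinc E v = {#}"
      proof (rule dinc_eqI)
        fix y show "count {#} (v,y) = count E (v,y)"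
          using a0 nb[of y] N by (cases "y = v") (auto simp: count_eq_zero_iff)
        show "count {#} (y,v) = count E (y,v)"
          using a0 nb[of y] N by (cases "y = v") (auto simp: count_eq_zero_iff)
      qed auto
      then show False using ne by simp
    qed
    from e_loops[OF this v(1), of a b] obtain E1 where E1: "(estep a b)\<^sup>*\<^sup>* (V,E) (V,E1)"
      "count E1 (v,v) = 1" "\<forall>z. z \<noteq> (v,v) \<longrightarrow> count E1 z = count E z" by blast
    have "dinc E1 v = {#(v,v)#}"
    proof (rule dinc_eqI)
      fix y show "count {#(v,v)#} (v,y) = count E1 (v,y)"
        using E1 nb[of y] N by (cases "y = v") auto
      show "count {#(v,v)#} (y,v) = count E1 (y,v)"
        using E1 nb[of y] N by (cases "y = v") auto
    qed auto
    then have "estep a b (V,E1) (V - {v}, E1 - {#(v,v)#})" using v by (intro estep.E1) auto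
    then have ?thesis using E1(1) by (meson rtranclp.rtrancl_into_rtrancl)
  }
  moreover
  {
    fix u assume N: "dneighbors E v = {u}"
    have u: "u \<in> V" "u \<noteq> v" "count E (v,u) + count E (u,v) \<ge> 1" using mem[of u] N by auto
    have nb2: "y \<noteq> v \<Longrightarrow> y \<noteq> u \<Longrightarrow> count E (v,y) = 0 \<and> count E (y,v) = 0" for y using nb N by auto
    from e_flip[of u v a b V E] u obtain E1 where E1: "(estep a b)\<^sup>*\<^sup>* (V,E) (V,E1)"
      "count E1 (u,v) = 0" "count E1 (v,u) = count E (v,u) + count E (u,v)"
      "\<forall>z. z \<noteq> (u,v) \<longrightarrow> z \<noteq> (v,u) \<longrightarrow> count E1 z = count E z" by auto
    from e_absorb[of v V u a b E1] u v obtain E2 where E2: "(estep a b)\<^sup>*\<^sup>* (V,E1) (V,E2)"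
      "count E2 (v,v) = 0" "count E2 (v,u) = count E1 (v,u) + (if count E1 (v,v) = 0 then 0 else 1)"
      "\<forall>z. z \<noteq> (v,v) \<longrightarrow> z \<noteq> (v,u) \<longrightarrow> count E2 z = count E1 z" by auto
    have "count E2 (v,u) \<ge> 1" using E2(3) E1(3) u by simp
    from e_dedup[OF this, of a b V] u obtain E3 where E3: "(estep a b)\<^sup>*\<^sup>* (V,E2) (V,E3)"
      "count E3 (v,u) = 1" "\<forall>z. z \<noteq> (v,u) \<longrightarrow> count E3 z = count E2 z" by auto
    have "dinc E3 v = {#(v,u)#}"
    proof (rule dinc_eqI)
      fix y show "count {#(v,u)#} (v,y) = count E3 (v,y)"
        using E1 E2 E3 nb2[of y] u by (cases "y = v"; cases "y = u") auto
      show "count {#(v,u)#} (y,v) = count E3 (y,v)"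
        using E1 E2 E3 nb2[of y] u by (cases "y = v"; cases "y = u") auto
    qed auto
    then have "estep a b (V,E3) (V - {v}, E3 - {#(v,u)#} + {#(u,u)#})" using v u by (intro estep.E3) auto
    moreover have "(estep a b)\<^sup>*\<^sup>* (V,E) (V,E3)" using E1(1) E2(1) E3(1) by (meson rtranclp_trans)
    ultimately have ?thesis by (meson rtranclp.rtrancl_into_rtrancl)
  }
  moreover
  {
    fix u w assume uw: "u \<noteq> w" and N: "dneighbors E v = {u,w}"
    have u: "u \<in> V" "u \<noteq> v" "count E (v,u) + count E (u,v) \<ge> 1" using mem[of u] N by auto
    have w: "w \<in> V" "w \<noteq> v" "count E (v,w) + count E (w,v) \<ge> 1" using mem[of w] N by auto
    have nb2: "y \<noteq> v \<Longrightarrow> y \<noteq> u \<Longrightarrow> y \<noteq> w \<Longrightarrow> count E (v,y) = 0 \<and> count E (y,v) = 0" for y using nb N by auto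
    from e_flip[of v u a b V E] u obtain E1 where E1: "(estep a b)\<^sup>*\<^sup>* (V,E) (V,E1)"
      "count E1 (v,u) = 0" "count E1 (u,v) = count E (u,v) + count E (v,u)"
      "\<forall>z. z \<noteq> (v,u) \<longrightarrow> z \<noteq> (u,v) \<longrightarrow> count E1 z = count E z" by auto
    from e_flip[of w v a b V E1] w obtain E2 where E2: "(estep a b)\<^sup>*\<^sup>* (V,E1) (V,E2)"
      "count E2 (w,v) = 0" "count E2 (v,w) = count E1 (v,w) + count E1 (w,v)"
      "\<forall>z. z \<noteq> (w,v) \<longrightarrow> z \<noteq> (v,w) \<longrightarrow> count E2 z = count E1 z" by auto
    from e_absorb[of v V w a b E2] w v obtain E3 where E3: "(estep a b)\<^sup>*\<^sup>* (V,E2) (V,E3)"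
      "count E3 (v,v) = 0" "count E3 (v,w) = count E2 (v,w) + (if count E2 (v,v) = 0 then 0 else 1)"
      "\<forall>z. z \<noteq> (v,v) \<longrightarrow> z \<noteq> (v,w) \<longrightarrow> count E3 z = count E2 z" by auto
    have "count E3 (u,v) \<ge> 1" using E3 E2 E1 u w uw by simp
    from e_dedup[OF this, of a b V] u obtain E4 where E4: "(estep a b)\<^sup>*\<^sup>* (V,E3) (V,E4)"
      "count E4 (u,v) = 1" "\<forall>z. z \<noteq> (u,v) \<longrightarrow> count E4 z = count E3 z" by auto
    have "count E4 (v,w) \<ge> 1" using E4 E3 E2 E1 u w uw by simp
    from e_dedup[OF this, of a b V] w obtain E5 where E5: "(estep a b)\<^sup>*\<^sup>* (V,E4) (V,E5)"
      "count E5 (v,w) = 1" "\<forall>z. z \<noteq> (v,w) \<longrightarrow> count E5 z = count E4 z" by auto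
    have "dinc E5 v = {#(u,v), (v,w)#}"
    proof (rule dinc_eqI)
      fix y show "count {#(u,v), (v,w)#} (v,y) = count E5 (v,y)"
        using E1 E2 E3 E4 E5 nb2[of y] u w uw by (cases "y = v"; cases "y = u"; cases "y = w") auto
      show "count {#(u,v), (v,w)#} (y,v) = count E5 (y,v)"
        using E1 E2 E3 E4 E5 nb2[of y] u w uw by (cases "y = v"; cases "y = u"; cases "y = w") auto
    qed auto
    then have "estep a b (V,E5) (V - {v}, E5 - {#(u,v), (v,w)#} + {#(u,w)#})" using v u w uw by (intro estep.E7) auto
    moreover have "(estep a b)\<^sup>*\<^sup>* (V,E) (V,E5)" using E1(1) E2(1) E3(1) E4(1) E5(1) by (meson rtranclp_trans)
    ultimately have ?thesis by (meson rtranclp.rtrancl_into_rtrancl)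
  }
  ultimately show ?thesis by blast
qed



theorem lemma1:
  shows "(\<forall>(V::'a set) (E::'a uprod multiset) a b v.
            wf_ugraph V E a b \<and> (\<forall>u w. u \<noteq> w \<longrightarrow> count E (Upair u w) \<le> 1)
            \<and> v \<in> V \<and> v \<notin> {a,b} \<and> uinc E v \<noteq> {#}
            \<longrightarrow> ((\<exists>E'. (nstep a b)\<^sup>*\<^sup>* (V, E) (V - {v}, E')) \<longleftrightarrow> card (uneighbors E v) \<le> 1))
       \<and> (\<forall>(V::'a set) (E::('a \<times> 'a) multiset) a b v.
            wf_dgraph V E a b \<and> v \<in> V \<and> v \<notin> {a,b} \<and> dinc E v \<noteq> {#}
            \<longrightarrow> ((\<exists>E'. (estep a b)\<^sup>*\<^sup>* (V, E) (V - {v}, E')) \<longleftrightarrow> card (dneighbors E v) \<le> 2))"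


proof (intro conjI allI impI)
  fix V :: "'a set" and E :: "'a uprod multiset" and a b v
  assume H: "wf_ugraph V E a b \<and> (\<forall>u w. u \<noteq> w \<longrightarrow> count E (Upair u w) \<le> 1)
            \<and> v \<in> V \<and> v \<notin> {a,b} \<and> uinc E v \<noteq> {#}"
  show "(\<exists>E'. (nstep a b)\<^sup>*\<^sup>* (V, E) (V - {v}, E')) \<longleftrightarrow> card (uneighbors E v) \<le> 1"
  proof
    assume "\<exists>E'. (nstep a b)\<^sup>*\<^sup>* (V, E) (V - {v}, E')"
    then obtain E' where p: "(nstep a b)\<^sup>*\<^sup>* (V, E) (V - {v}, E')" by blast
    show "card (uneighbors E v) \<le> 1"
    proof (rule ccontr)
      assume "\<not> card (uneighbors E v) \<le> 1"
      then have "card (uneighbors E v) \<ge> 2" by simp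
      from n_inv[OF p this] H have "v \<in> V - {v}" by blast
      then show False by blast
    qed
  next
    assume "card (uneighbors E v) \<le> 1"
    then show "\<exists>E'. (nstep a b)\<^sup>*\<^sup>* (V, E) (V - {v}, E')" using H n_ok[of V E a b v] by blast
  qed
next
  fix V :: "'a set" and E :: "('a \<times> 'a) multiset" and a b v
  assume H: "wf_dgraph V E a b \<and> v \<in> V \<and> v \<notin> {a,b} \<and> dinc E v \<noteq> {#}"
  show "(\<exists>E'. (estep a b)\<^sup>*\<^sup>* (V, E) (V - {v}, E')) \<longleftrightarrow> card (dneighbors E v) \<le> 2"
  proof
    assume "\<exists>E'. (estep a b)\<^sup>*\<^sup>* (V, E) (V - {v}, E')"
    then obtain E' where p: "(estep a b)\<^sup>*\<^sup>* (V, E) (V - {v}, E')" by blast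
    show "card (dneighbors E v) \<le> 2"
    proof (rule ccontr)
      assume "\<not> card (dneighbors E v) \<le> 2"
      then have "card (dneighbors E v) \<ge> 3" by simp
      from d_inv[OF p this] H have "v \<in> V - {v}" by blast
      then show False by blast
    qed
  next
    assume "card (dneighbors E v) \<le> 2"
    then show "\<exists>E'. (estep a b)\<^sup>*\<^sup>* (V, E) (V - {v}, E')" using H e_ok[of V E a b v] by blast
  qed
qed

end
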